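(* Let $\mathcal{C}$ be a hereditary class of graphs that has bounded linear clique-width and is $2$-well-quasi-ordered. Then there exists an MSO-interpretation $I$ from finite words to graphs such that $\mathcal{C}\subseteq \mathrm{Im}(I)\subseteq \mathord{\downarrow}\mathcal{C}$, where $\mathord{\downarrow}\mathcal{C}$ denotes the hereditary closure of $\mathcal{C}$.
   Context: Graphs are finite, simple and undirected; $G$ is an induced subgraph of $H$ if there is an injective map $h$ with $\{h(u),h(v)\}\in E(H)$ iff $\{u,v\}\in E(G)$. A class is hereditary if closed under induced subgraphs; the hereditary closure of a class is the class of all induced subgraphs of its members. An MSO-interpretation from words over a finite alphabet $\Sigma$ to graphs is a triple $I=(\varphi_{\mathrm{edge}}(x,y),\varphi_{\mathrm{dom}}(x),\varphi_\Delta)$ of MSO formulas over words (with letter predicates and the order on positions), $\varphi_\Delta$ a sentence. For a word $w$, $I(w)$ is the graph with vertices the positions $i$ of $w$ with $w\models\varphi_{\mathrm{dom}}(i)$ and edges $\{i,j\}$ for $i<j$ with $w\models\varphi_{\mathrm{edge}}(i,j)$; $\mathrm{Im}(I)=\{I(w): w\in\Sigma^*, w\models\varphi_\Delta\}$. A class $\mathcal{C}$ has bounded linear clique-width if $\mathcal{C}\subseteq\mathrm{Im}(I)$ for some MSO-interpretation $I$. A class is $2$-well-quasi-ordered if for every set $X$ of size at most $2$, the class of graphs of $\mathcal{C}$ with vertices labelled by $X$ is well-quasi-ordered by label-preserving induced-subgraph embeddings. *)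

theory Defs
  imports Main
begin

type_synonym graph = "nat set \<times> nat set set"

definition is_graph :: "graph \<Rightarrow> bool" where
  "is_graph G \<longleftrightarrow> finite (fst G) \<and>
     (\<forall>e\<in>snd G. \<exists>u v. u \<noteq> v \<and> u \<in> fst G \<and> v \<in> fst G \<and> e = {u, v})"

definition induced_sub :: "graph \<Rightarrow> graph \<Rightarrow> bool" where
  "induced_sub G H \<longleftrightarrow> (\<exists>h. inj_on h (fst G) \<and> h ` fst G \<subseteq> fst H \<and>
     (\<forall>u\<in>fst G. \<forall>v\<in>fst G. ({h u, h v} \<in> snd H \<longleftrightarrow> {u, v} \<in> snd G)))"

definition graph_iso :: "graph \<Rightarrow> graph \<Rightarrow> bool" where
  "graph_iso G H \<longleftrightarrow> (\<exists>h. bij_betw h (fst G) (fst H) \<and>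
     (\<forall>u\<in>fst G. \<forall>v\<in>fst G. ({h u, h v} \<in> snd H \<longleftrightarrow> {u, v} \<in> snd G)))"

definition hereditary :: "graph set \<Rightarrow> bool" where
  "hereditary C \<longleftrightarrow> (\<forall>H\<in>C. \<forall>G. is_graph G \<and> induced_sub G H \<longrightarrow> G \<in> C)"

definition hered_closure :: "graph set \<Rightarrow> graph set" where
  "hered_closure C = {G. is_graph G \<and> (\<exists>H\<in>C. induced_sub G H)}"

text \<open>A labelled graph is a graph with a labelling of its vertices (only the
values on the vertex set matter).\<close>
definition lab_embed :: "graph \<times> (nat \<Rightarrow> nat) \<Rightarrow> graph \<times> (nat \<Rightarrow> nat) \<Rightarrow> bool" where
  "lab_embed Gl Hm \<longleftrightarrow> (case Gl of (G, l) \<Rightarrow> case Hm of (H, m) \<Rightarrow>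
     (\<exists>h. inj_on h (fst G) \<and> h ` fst G \<subseteq> fst H \<and>
       (\<forall>u\<in>fst G. \<forall>v\<in>fst G. ({h u, h v} \<in> snd H \<longleftrightarrow> {u, v} \<in> snd G)) \<and>
       (\<forall>v\<in>fst G. m (h v) = l v)))"

definition wqo_on :: "('a \<Rightarrow> 'a \<Rightarrow> bool) \<Rightarrow> 'a set \<Rightarrow> bool" where
  "wqo_on P A \<longleftrightarrow> (\<forall>x\<in>A. P x x) \<and>
     (\<forall>x\<in>A. \<forall>y\<in>A. \<forall>z\<in>A. P x y \<longrightarrow> P y z \<longrightarrow> P x z) \<and>
     (\<forall>f::nat \<Rightarrow> 'a. (\<forall>i. f i \<in> A) \<longrightarrow> (\<exists>i j. i < j \<and> P (f i) (f j)))"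

definition labelled_class :: "graph set \<Rightarrow> nat set \<Rightarrow> (graph \<times> (nat \<Rightarrow> nat)) set" where
  "labelled_class C X = {(G, l). G \<in> C \<and> l ` fst G \<subseteq> X}"

definition k_wqo :: "nat \<Rightarrow> graph set \<Rightarrow> bool" where
  "k_wqo k C \<longleftrightarrow> (\<forall>X::nat set. finite X \<and> card X \<le> k \<longrightarrow>
     wqo_on lab_embed (labelled_class C X))"

text \<open>First-order variables and set variables are named by natural numbers
(separate name spaces). Positions of a word w are 0..length w - 1.\<close>
datatype 'a mso =
    Letter 'a nat
  | Less nat nat
  | Eq nat nat
  | Mem nat nat
  | Neg "'a mso"
  | Disj "'a mso" "'a mso"
  | Ex1 nat "'a mso"
  | Ex2 nat "'a mso"

fun sat :: "'a list \<Rightarrow> (nat \<Rightarrow> nat) \<Rightarrow> (nat \<Rightarrow> nat set) \<Rightarrow> 'a mso \<Rightarrow> bool" where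
  "sat w fe se (Letter a x) \<longleftrightarrow> fe x < length w \<and> w ! (fe x) = a"
| "sat w fe se (Less x y) \<longleftrightarrow> fe x < fe y"
| "sat w fe se (Eq x y) \<longleftrightarrow> fe x = fe y"
| "sat w fe se (Mem x X) \<longleftrightarrow> fe x \<in> se X"
| "sat w fe se (Neg \<phi>) \<longleftrightarrow> \<not> sat w fe se \<phi>"
| "sat w fe se (Disj \<phi> \<psi>) \<longleftrightarrow> sat w fe se \<phi> \<or> sat w fe se \<psi>"
| "sat w fe se (Ex1 x \<phi>) \<longleftrightarrow> (\<exists>i < length w. sat w (fe(x := i)) se \<phi>)"
| "sat w fe se (Ex2 X \<phi>) \<longleftrightarrow> (\<exists>S \<subseteq> {..<length w}. sat w fe (se(X := S)) \<phi>)"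

fun fv1 :: "'a mso \<Rightarrow> nat set" where
  "fv1 (Letter a x) = {x}"
| "fv1 (Less x y) = {x, y}"
| "fv1 (Eq x y) = {x, y}"
| "fv1 (Mem x X) = {x}"
| "fv1 (Neg \<phi>) = fv1 \<phi>"
| "fv1 (Disj \<phi> \<psi>) = fv1 \<phi> \<union> fv1 \<psi>"
| "fv1 (Ex1 x \<phi>) = fv1 \<phi> - {x}"
| "fv1 (Ex2 X \<phi>) = fv1 \<phi>"

fun fv2 :: "'a mso \<Rightarrow> nat set" where
  "fv2 (Letter a x) = {}"
| "fv2 (Less x y) = {}"
| "fv2 (Eq x y) = {}"
| "fv2 (Mem x X) = {X}"
| "fv2 (Neg \<phi>) = fv2 \<phi>"
| "fv2 (Disj \<phi> \<psi>) = fv2 \<phi> \<union> fv2 \<psi>"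
| "fv2 (Ex1 x \<phi>) = fv2 \<phi>"
| "fv2 (Ex2 X \<phi>) = fv2 \<phi> - {X}"

record mso_interp =
  alph :: "nat set"
  phi_edge :: "nat mso"
  phi_dom :: "nat mso"
  phi_Delta :: "nat mso"

definition wf_interp :: "mso_interp \<Rightarrow> bool" where
  "wf_interp I \<longleftrightarrow> finite (alph I) \<and>
     fv1 (phi_edge I) \<subseteq> {0, 1} \<and> fv2 (phi_edge I) = {} \<and>
     fv1 (phi_dom I) \<subseteq> {0} \<and> fv2 (phi_dom I) = {} \<and>
     fv1 (phi_Delta I) = {} \<and> fv2 (phi_Delta I) = {}"

definition interp_verts :: "mso_interp \<Rightarrow> nat list \<Rightarrow> nat set" where
  "interp_verts I w = {i. i < length w \<and> sat w ((\<lambda>_. 0)(0 := i)) (\<lambda>_. {}) (phi_dom I)}"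

definition apply_interp :: "mso_interp \<Rightarrow> nat list \<Rightarrow> graph" where
  "apply_interp I w = (interp_verts I w,
     {{i, j} | i j. i < j \<and> i \<in> interp_verts I w \<and> j \<in> interp_verts I w \<and>
        sat w ((\<lambda>_. 0)(0 := i, 1 := j)) (\<lambda>_. {}) (phi_edge I)})"

definition Im :: "mso_interp \<Rightarrow> graph set" where
  "Im I = {apply_interp I w | w. w \<in> lists (alph I) \<and> sat w (\<lambda>_. 0) (\<lambda>_. {}) (phi_Delta I)}"

definition subclass_iso :: "graph set \<Rightarrow> graph set \<Rightarrow> bool" where
  "subclass_iso C D \<longleftrightarrow> (\<forall>G\<in>C. \<exists>H\<in>D. graph_iso G H)"

definition bounded_lcw :: "graph set \<Rightarrow> bool" where
  "bounded_lcw C \<longleftrightarrow> (\<exists>I. wf_interp I \<and> subclass_iso C (Im I))"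

end

theory Submission
  imports Defs
begin


definition TT :: "nat mso" where "TT = Neg (Ex1 0 (Neg (Eq 0 0)))"
definition And :: "nat mso \<Rightarrow> nat mso \<Rightarrow> nat mso" where "And a b = Neg (Disj (Neg a) (Neg b))"
fun Conj :: "nat mso list \<Rightarrow> nat mso" where
  "Conj [] = TT" | "Conj (a#as) = And a (Conj as)"

lemma sat_TT[simp]: "sat w fe se TT" by (simp add: TT_def)
lemma sat_And[simp]: "sat w fe se (And a b) \<longleftrightarrow> sat w fe se a \<and> sat w fe se b" by (simp add: And_def)
lemma fv_TT[simp]: "fv1 TT = {}" "fv2 TT = {}" by (auto simp: TT_def)
lemma fv_And[simp]: "fv1 (And a b) = fv1 a \<union> fv1 b" "fv2 (And a b) = fv2 a \<union> fv2 b" by (auto simp: And_def)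
lemma sat_Conj[simp]: "sat w fe se (Conj xs) \<longleftrightarrow> (\<forall>\<phi>\<in>set xs. sat w fe se \<phi>)" by (induction xs) auto
lemma fv_Conj[simp]: "fv1 (Conj xs) = (\<Union>\<phi>\<in>set xs. fv1 \<phi>)" "fv2 (Conj xs) = (\<Union>\<phi>\<in>set xs. fv2 \<phi>)"
  by (induction xs) auto

lemma coincide:
  "(\<forall>x\<in>fv1 \<phi>. fe x = fe' x) \<Longrightarrow> (\<forall>X\<in>fv2 \<phi>. se X = se' X) \<Longrightarrow> sat w fe se \<phi> = sat w fe' se' \<phi>"
proof (induction \<phi> arbitrary: fe fe' se se')
  case (Ex1 x \<phi>)
  have "\<And>i. sat w (fe(x:=i)) se \<phi> = sat w (fe'(x:=i)) se' \<phi>"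
    using Ex1.prems by (intro Ex1.IH) auto
  then show ?case by simp
next
  case (Ex2 X \<phi>)
  have "\<And>S. sat w fe (se(X:=S)) \<phi> = sat w fe' (se'(X:=S)) \<phi>"
    using Ex2.prems by (intro Ex2.IH) auto
  then show ?case by simp
next
  case (Disj a b)
  have "sat w fe se a = sat w fe' se' a" using Disj.prems by (intro Disj.IH) auto
  moreover have "sat w fe se b = sat w fe' se' b" using Disj.prems by (intro Disj.IH) auto
  ultimately show ?case by simp
qed auto

definition domx :: "mso_interp \<Rightarrow> nat \<Rightarrow> nat mso" where
  "domx I x = Ex1 0 (And (Eq 0 x) (phi_dom I))"
definition Ed :: "mso_interp \<Rightarrow> nat \<Rightarrow> nat \<Rightarrow> nat mso" where
  "Ed I x y = Ex1 0 (Ex1 1 (And (Eq 0 x) (And (Eq 1 y) (And (Less 0 1) (phi_edge I)))))"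
definition adj :: "mso_interp \<Rightarrow> nat \<Rightarrow> nat \<Rightarrow> nat mso" where
  "adj I x y = Disj (Ed I x y) (Ed I y x)"

lemma sat_domx:
  assumes "wf_interp I" "x \<ge> 2"
  shows "sat w fe se (domx I x) \<longleftrightarrow> fe x \<in> interp_verts I w"
proof -
  have "sat w (fe(0:=fe x)) se (phi_dom I) = sat w ((\<lambda>_. 0)(0 := fe x)) (\<lambda>_. {}) (phi_dom I)"
    using assms(1) by (intro coincide) (auto simp: wf_interp_def)
  then show ?thesis using assms(2) by (auto simp: domx_def interp_verts_def)
qed

lemma sat_Ed:
  assumes "wf_interp I" "x \<ge> 2" "y \<ge> 2"
  shows "sat w fe se (Ed I x y) \<longleftrightarrow> fe x < length w \<and> fe y < length w \<and> fe x < fe y \<and>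
     sat w ((\<lambda>_. 0)(0 := fe x, 1 := fe y)) (\<lambda>_. {}) (phi_edge I)"
proof -
  have "sat w (fe(0:=fe x, 1:= fe y)) se (phi_edge I) = sat w ((\<lambda>_. 0)(0 := fe x, 1 := fe y)) (\<lambda>_. {}) (phi_edge I)"
    using assms(1) by (intro coincide) (auto simp: wf_interp_def)
  then show ?thesis using assms(2,3) by (auto simp: Ed_def)
qed

lemma edge_iff:
  assumes "p \<in> interp_verts I w" "q \<in> interp_verts I w"
  shows "{p,q} \<in> snd (apply_interp I w) \<longleftrightarrow>
    (p < q \<and> sat w ((\<lambda>_. 0)(0 := p, 1 := q)) (\<lambda>_. {}) (phi_edge I)) \<or>
    (q < p \<and> sat w ((\<lambda>_. 0)(0 := q, 1 := p)) (\<lambda>_. {}) (phi_edge I))"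
  using assms by (auto simp: apply_interp_def doubleton_eq_iff)

lemma no_loop: "{p} \<notin> snd (apply_interp I w)"
  by (auto simp: apply_interp_def doubleton_eq_iff)

lemma verts_len: "p \<in> interp_verts I w \<Longrightarrow> p < length w" by (simp add: interp_verts_def)

lemma sat_adj:
  assumes "wf_interp I" "x \<ge> 2" "y \<ge> 2" "fe x \<in> interp_verts I w" "fe y \<in> interp_verts I w"
  shows "sat w fe se (adj I x y) \<longleftrightarrow> {fe x, fe y} \<in> snd (apply_interp I w)"
  using assms verts_len[OF assms(4)] verts_len[OF assms(5)]
  by (auto simp add: adj_def sat_Ed edge_iff)

lemma sat_foldr_Ex1:
  "sat w fe se (foldr Ex1 xs \<phi>) \<longleftrightarrow>
   (\<exists>g. (\<forall>y\<in>set xs. g y < length w) \<and> sat w (\<lambda>y. if y \<in> set xs then g y else fe y) se \<phi>)"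
proof (induction xs arbitrary: fe)
  case Nil then show ?case by simp
next
  case (Cons x xs)
  show ?case
  proof
    assume "sat w fe se (foldr Ex1 (x # xs) \<phi>)"
    then obtain i g where i: "i < length w" and g: "\<forall>y\<in>set xs. g y < length w"
      and s: "sat w (\<lambda>y. if y \<in> set xs then g y else (fe(x:=i)) y) se \<phi>"
      using Cons.IH by auto
    define g' where "g' y = (if y \<in> set xs then g y else i)" for y
    have "(\<lambda>y. if y \<in> set xs then g y else (fe(x:=i)) y) = (\<lambda>y. if y \<in> set (x#xs) then g' y else fe y)"
      by (auto simp: g'_def)
    then show "\<exists>g. (\<forall>y\<in>set (x#xs). g y < length w) \<and> sat w (\<lambda>y. if y \<in> set (x#xs) then g y else fe y) se \<phi>"
      using s g i by (intro exI[of _ g']) (auto simp: g'_def)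
  next
    assume "\<exists>g. (\<forall>y\<in>set (x#xs). g y < length w) \<and> sat w (\<lambda>y. if y \<in> set (x#xs) then g y else fe y) se \<phi>"
    then obtain g where g: "\<forall>y\<in>set (x#xs). g y < length w" 
      and s: "sat w (\<lambda>y. if y \<in> set (x#xs) then g y else fe y) se \<phi>" by blast
    have "(\<lambda>y. if y \<in> set xs then g y else (fe(x:=g x)) y) = (\<lambda>y. if y \<in> set (x#xs) then g y else fe y)"
      by auto
    then have "sat w (fe(x:=g x)) se (foldr Ex1 xs \<phi>)" using Cons.IH g s by auto
    then show "sat w fe se (foldr Ex1 (x # xs) \<phi>)" using g by auto
  qed
qed

lemma fv_foldr_Ex1: "fv1 (foldr Ex1 xs \<phi>) = fv1 \<phi> - set xs" "fv2 (foldr Ex1 xs \<phi>) = fv2 \<phi>"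
  by (induction xs) auto



definition body :: "mso_interp \<Rightarrow> graph \<Rightarrow> nat mso" where
  "body I F = (let vs = sorted_list_of_set (fst F) in
     And (Conj (map (\<lambda>v. domx I (v+2)) vs))
         (Conj (map (\<lambda>(u,v). And (Neg (Eq (u+2) (v+2)))
                (if {u,v} \<in> snd F then adj I (u+2) (v+2) else Neg (adj I (u+2) (v+2))))
            (filter (\<lambda>(u,v). u \<noteq> v) (List.product vs vs)))))"

definition contains :: "mso_interp \<Rightarrow> graph \<Rightarrow> nat mso" where
  "contains I F = foldr Ex1 (map (\<lambda>v. v+2) (sorted_list_of_set (fst F))) (body I F)"


lemma sat_Conj_map: "sat w fe se (Conj (map f xs)) \<longleftrightarrow> (\<forall>x\<in>set xs. sat w fe se (f x))"
  by simp

lemma set_pairs: "set (filter (\<lambda>(u,v). u \<noteq> v) (List.product vs vs)) = {(u,v). u \<in> set vs \<and> v \<in> set vs \<and> u \<noteq> v}"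
  by auto

lemma sat_body:
  "sat w fe se (body I F) \<longleftrightarrow> (\<forall>v\<in>set (sorted_list_of_set (fst F)). sat w fe se (domx I (v+2))) \<and>
     (\<forall>u\<in>set (sorted_list_of_set (fst F)). \<forall>v\<in>set (sorted_list_of_set (fst F)). u \<noteq> v \<longrightarrow>
        sat w fe se (And (Neg (Eq (u+2) (v+2)))
                (if {u,v} \<in> snd F then adj I (u+2) (v+2) else Neg (adj I (u+2) (v+2)))))"
  unfolding body_def Let_def sat_And sat_Conj_map set_pairs set_map by auto

lemma sat_contains:
  assumes I: "wf_interp I" and F: "is_graph F"
  shows "sat w fe se (contains I F) \<longleftrightarrow> induced_sub F (apply_interp I w)"
proof -
  have fin: "finite (fst F)" using F by (simp add: is_graph_def)
  define vs where "vs = sorted_list_of_set (fst F)"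
  have svs: "set vs = fst F" using fin by (simp add: vs_def)
  define xs where "xs = map (\<lambda>v. v+2) vs"
  have sxs: "set xs = (\<lambda>v. v+2) ` fst F" using svs by (simp add: xs_def)
  have loopF: "\<And>u. {u} \<notin> snd F" using F by (auto simp: is_graph_def doubleton_eq_iff)
  let ?E = "snd (apply_interp I w)" and ?V = "interp_verts I w"
  have fst_ap: "fst (apply_interp I w) = ?V" by (simp add: apply_interp_def)
  have key: "sat w fe' se (body I F) \<longleftrightarrow>
     (\<forall>v\<in>fst F. fe' (v+2) \<in> ?V) \<and>
     (\<forall>u\<in>fst F. \<forall>v\<in>fst F. u \<noteq> v \<longrightarrow> fe' (u+2) \<noteq> fe' (v+2) \<and>
        ({fe' (u+2), fe' (v+2)} \<in> ?E \<longleftrightarrow> {u,v} \<in> snd F))" for fe'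
  proof -
    have d: "sat w fe' se (domx I (v+2)) \<longleftrightarrow> fe' (v+2) \<in> ?V" for v
      by (rule sat_domx[OF I]) simp
    show ?thesis
    proof
      assume s: "sat w fe' se (body I F)"
      then have dv: "\<forall>v\<in>fst F. fe' (v+2) \<in> ?V"
        using s unfolding sat_body svs[unfolded vs_def] d by blast
      moreover have "\<forall>u\<in>fst F. \<forall>v\<in>fst F. u \<noteq> v \<longrightarrow> fe' (u+2) \<noteq> fe' (v+2) \<and>
        ({fe' (u+2), fe' (v+2)} \<in> ?E \<longleftrightarrow> {u,v} \<in> snd F)"
      proof (intro ballI impI)
        fix u v assume uv: "u \<in> fst F" "v \<in> fst F" "u \<noteq> v"
        have a: "sat w fe' se (adj I (u+2) (v+2)) \<longleftrightarrow> {fe' (u+2), fe' (v+2)} \<in> ?E"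
          using uv dv by (intro sat_adj[OF I]) auto
        have "sat w fe' se (And (Neg (Eq (u+2) (v+2)))
                (if {u,v} \<in> snd F then adj I (u+2) (v+2) else Neg (adj I (u+2) (v+2))))"
          using s uv unfolding sat_body svs[unfolded vs_def] by blast
        then show "fe' (u+2) \<noteq> fe' (v+2) \<and> ({fe' (u+2), fe' (v+2)} \<in> ?E \<longleftrightarrow> {u,v} \<in> snd F)"
          using a by (auto split: if_splits)
      qed
      ultimately show "(\<forall>v\<in>fst F. fe' (v+2) \<in> ?V) \<and>
     (\<forall>u\<in>fst F. \<forall>v\<in>fst F. u \<noteq> v \<longrightarrow> fe' (u+2) \<noteq> fe' (v+2) \<and>
        ({fe' (u+2), fe' (v+2)} \<in> ?E \<longleftrightarrow> {u,v} \<in> snd F))" by blast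
    next
      assume r: "(\<forall>v\<in>fst F. fe' (v+2) \<in> ?V) \<and>
     (\<forall>u\<in>fst F. \<forall>v\<in>fst F. u \<noteq> v \<longrightarrow> fe' (u+2) \<noteq> fe' (v+2) \<and>
        ({fe' (u+2), fe' (v+2)} \<in> ?E \<longleftrightarrow> {u,v} \<in> snd F))"
      have "sat w fe' se (And (Neg (Eq (u+2) (v+2)))
                (if {u,v} \<in> snd F then adj I (u+2) (v+2) else Neg (adj I (u+2) (v+2))))"
        if uv: "u \<in> fst F" "v \<in> fst F" "u \<noteq> v" for u v
      proof -
        have a: "sat w fe' se (adj I (u+2) (v+2)) \<longleftrightarrow> {fe' (u+2), fe' (v+2)} \<in> ?E"
          using uv r by (intro sat_adj[OF I]) auto
        then show ?thesis using r uv by (simp split: if_split)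
      qed
      then show "sat w fe' se (body I F)"
        using r unfolding sat_body svs[unfolded vs_def] d by blast
    qed
  qed
  have "sat w fe se (contains I F) \<longleftrightarrow>
     (\<exists>g. (\<forall>y\<in>set xs. g y < length w) \<and> sat w (\<lambda>y. if y \<in> set xs then g y else fe y) se (body I F))"
    unfolding contains_def xs_def vs_def by (rule sat_foldr_Ex1)
  also have "\<dots> \<longleftrightarrow> induced_sub F (apply_interp I w)"
  proof
    assume "\<exists>g. (\<forall>y\<in>set xs. g y < length w) \<and> sat w (\<lambda>y. if y \<in> set xs then g y else fe y) se (body I F)"
    then obtain g where "sat w (\<lambda>y. if y \<in> set xs then g y else fe y) se (body I F)" by blast
    then have r: "(\<forall>v\<in>fst F. g (v+2) \<in> ?V) \<and>
     (\<forall>u\<in>fst F. \<forall>v\<in>fst F. u \<noteq> v \<longrightarrow> g (u+2) \<noteq> g (v+2) \<and>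
        ({g (u+2), g (v+2)} \<in> ?E \<longleftrightarrow> {u,v} \<in> snd F))"
      unfolding key by (simp add: sxs)
    show "induced_sub F (apply_interp I w)"
      unfolding induced_sub_def
    proof (intro exI[of _ "\<lambda>v. g (v+2)"] conjI ballI)
      show "inj_on (\<lambda>v. g (v + 2)) (fst F)" using r by (auto simp: inj_on_def)
      show "(\<lambda>v. g (v + 2)) ` fst F \<subseteq> fst (apply_interp I w)" using r fst_ap by auto
      fix u v assume uv: "u \<in> fst F" "v \<in> fst F"
      show "({g (u + 2), g (v + 2)} \<in> ?E) = ({u, v} \<in> snd F)"
      proof (cases "u = v")
        case True then show ?thesis using loopF no_loop by simp
      next
        case False then show ?thesis using r uv by blast
      qed
    qed
  next
    assume "induced_sub F (apply_interp I w)"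
    then obtain h where h: "inj_on h (fst F)" "h ` fst F \<subseteq> ?V"
      "\<forall>u\<in>fst F. \<forall>v\<in>fst F. ({h u, h v} \<in> ?E \<longleftrightarrow> {u, v} \<in> snd F)"
      unfolding induced_sub_def fst_ap by blast
    define g where "g y = h (y - 2)" for y
    have gv: "g (v+2) = h v" "g (Suc (Suc v)) = h v" for v by (simp_all add: g_def)
    have "sat w (\<lambda>y. if y \<in> set xs then g y else fe y) se (body I F)"
      unfolding key using h by (auto simp: sxs gv inj_on_def)
    moreover have "\<forall>y\<in>set xs. g y < length w" using h verts_len by (auto simp: sxs gv)
    ultimately show "\<exists>g. (\<forall>y\<in>set xs. g y < length w) \<and> sat w (\<lambda>y. if y \<in> set xs then g y else fe y) se (body I F)"
      by blast
  qed
  finally show ?thesis .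
qed

lemma fv_contains:
  assumes I: "wf_interp I" and F: "is_graph F"
  shows "fv1 (contains I F) = {}" "fv2 (contains I F) = {}"
proof -
  have fin: "finite (fst F)" using F by (simp add: is_graph_def)
  have d: "fv1 (domx I x) \<subseteq> {x}" "fv2 (domx I x) = {}" for x
    using I by (auto simp: domx_def wf_interp_def)
  have e: "fv1 (Ed I x y) \<subseteq> {x,y}" "fv2 (Ed I x y) = {}" for x y
    using I by (auto simp: Ed_def wf_interp_def)
  have a: "fv1 (adj I x y) \<subseteq> {x,y}" "fv2 (adj I x y) = {}" for x y
    using e[of x y] e[of y x] by (auto simp: adj_def)
  have "fv1 (body I F) \<subseteq> (\<lambda>v. v+2) ` fst F"
  proof
    fix x assume "x \<in> fv1 (body I F)"
    then have "(\<exists>v\<in>fst F. x \<in> fv1 (domx I (v+2))) \<or>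
      (\<exists>u\<in>fst F. \<exists>v\<in>fst F. x \<in> fv1 (And (Neg (Eq (u+2) (v+2)))
                (if {u,v} \<in> snd F then adj I (u+2) (v+2) else Neg (adj I (u+2) (v+2)))))"
      using fin unfolding body_def Let_def fv_And fv_Conj set_pairs set_map by (auto split: if_splits)
    then show "x \<in> (\<lambda>v. v+2) ` fst F"
    proof
      assume "\<exists>v\<in>fst F. x \<in> fv1 (domx I (v+2))"
      then show ?thesis using d by blast
    next
      assume "\<exists>u\<in>fst F. \<exists>v\<in>fst F. x \<in> fv1 (And (Neg (Eq (u+2) (v+2)))
                (if {u,v} \<in> snd F then adj I (u+2) (v+2) else Neg (adj I (u+2) (v+2))))"
      then obtain u v where uv: "u \<in> fst F" "v \<in> fst F" and
        "x \<in> fv1 (And (Neg (Eq (u+2) (v+2)))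
                (if {u,v} \<in> snd F then adj I (u+2) (v+2) else Neg (adj I (u+2) (v+2))))" by blast
      then have "x \<in> {u+2, v+2} \<union> fv1 (adj I (u+2) (v+2))" by (auto split: if_splits)
      then have "x = u+2 \<or> x = v+2" using a(1)[of "u+2" "v+2"] by blast
      then show ?thesis using uv by blast
    qed
  qed
  then show "fv1 (contains I F) = {}" using fin by (auto simp: contains_def fv_foldr_Ex1)
  show "fv2 (contains I F) = {}" using d a unfolding contains_def fv_foldr_Ex1 body_def Let_def fv_And fv_Conj set_pairs set_map
    by (auto split: if_splits)
qed



lemma induced_sub_refl: "induced_sub G G"
  unfolding induced_sub_def by (intro exI[of _ id]) auto

lemma induced_sub_trans: "induced_sub A B \<Longrightarrow> induced_sub B C \<Longrightarrow> induced_sub A C"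
  unfolding induced_sub_def
proof (elim exE conjE)
  fix h g assume h: "inj_on h (fst A)" "h ` fst A \<subseteq> fst B"
    "\<forall>u\<in>fst A. \<forall>v\<in>fst A. ({h u, h v} \<in> snd B) = ({u, v} \<in> snd A)"
  and g: "inj_on g (fst B)" "g ` fst B \<subseteq> fst C"
    "\<forall>u\<in>fst B. \<forall>v\<in>fst B. ({g u, g v} \<in> snd C) = ({u, v} \<in> snd B)"
  show "\<exists>h. inj_on h (fst A) \<and> h ` fst A \<subseteq> fst C \<and>
     (\<forall>u\<in>fst A. \<forall>v\<in>fst A. ({h u, h v} \<in> snd C) = ({u, v} \<in> snd A))"
  proof (intro exI[of _ "g \<circ> h"] conjI ballI)
    show "inj_on (g \<circ> h) (fst A)" using h g by (auto intro: comp_inj_on inj_on_subset)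
    show "(g \<circ> h) ` fst A \<subseteq> fst C" using h g by (auto simp: image_subset_iff)
    fix u v assume uv: "u \<in> fst A" "v \<in> fst A"
    have hb: "h u \<in> fst B" "h v \<in> fst B" using h(2) uv by auto
    have "({g (h u), g (h v)} \<in> snd C) = ({h u, h v} \<in> snd B)" using g(3) hb by metis
    also have "\<dots> = ({u, v} \<in> snd A)" using h(3) uv by metis
    finally show "({(g \<circ> h) u, (g \<circ> h) v} \<in> snd C) = ({u, v} \<in> snd A)" by simp
  qed
qed

lemma iso_sub: "graph_iso G H \<Longrightarrow> induced_sub H G"
  unfolding graph_iso_def induced_sub_def
proof (elim exE conjE)
  fix h assume b: "bij_betw h (fst G) (fst H)"
    and e: "\<forall>u\<in>fst G. \<forall>v\<in>fst G. ({h u, h v} \<in> snd H) = ({u, v} \<in> snd G)"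
  let ?g = "inv_into (fst G) h"
  have b': "bij_betw ?g (fst H) (fst G)" using b by (rule bij_betw_inv_into)
  have hg: "\<And>x. x \<in> fst H \<Longrightarrow> h (?g x) = x" using b by (meson bij_betw_inv_into_right)
  show "\<exists>h. inj_on h (fst H) \<and> h ` fst H \<subseteq> fst G \<and>
      (\<forall>u\<in>fst H. \<forall>v\<in>fst H. ({h u, h v} \<in> snd G) = ({u, v} \<in> snd H))"
  proof (intro exI[of _ ?g] conjI ballI)
    show "inj_on ?g (fst H)" using b' by (simp add: bij_betw_def)
    show "?g ` fst H \<subseteq> fst G" using b' by (simp add: bij_betw_def)
    fix u v assume uv: "u \<in> fst H" "v \<in> fst H"
    have "?g u \<in> fst G" "?g v \<in> fst G" using b' uv by (auto simp: bij_betw_def)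
    then show "({?g u, ?g v} \<in> snd G) = ({u, v} \<in> snd H)" using e hg uv by metis
  qed
qed

lemma empty_sub: "induced_sub ({}, {}) G"
  unfolding induced_sub_def by auto

lemma empty_graph: "is_graph ({}, {})" by (simp add: is_graph_def)

definition del :: "graph \<Rightarrow> nat \<Rightarrow> graph" where
  "del F v = (fst F - {v}, {e\<in>snd F. v \<notin> e})"

lemma del_props:
  assumes "is_graph F" "v \<in> fst F"
  shows "is_graph (del F v)" "induced_sub (del F v) F" "card (fst (del F v)) < card (fst F)"
proof -
  have fin: "finite (fst F)" using assms by (simp add: is_graph_def)
  show "is_graph (del F v)" using assms unfolding is_graph_def del_def by fastforce
  show "induced_sub (del F v) F" unfolding induced_sub_def del_def
    by (intro exI[of _ id]) auto
  have "card (fst F) > 0" using fin assms(2) card_gt_0_iff by blast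
  then show "card (fst (del F v)) < card (fst F)" using fin assms(2)
    by (simp add: del_def)
qed

definition lab :: "graph \<Rightarrow> nat \<Rightarrow> nat \<Rightarrow> nat" where
  "lab F v u = (if {u, v} \<in> snd F then 1 else 0)"

lemma extend:
  assumes F1: "is_graph F1" and F2: "is_graph F2" and v1: "v1 \<in> fst F1" and v2: "v2 \<in> fst F2"
    and emb: "lab_embed (del F1 v1, lab F1 v1) (del F2 v2, lab F2 v2)"
  shows "induced_sub F1 F2"
proof -
  obtain h where h: "inj_on h (fst F1 - {v1})" "h ` (fst F1 - {v1}) \<subseteq> fst F2 - {v2}"
    "\<forall>u\<in>fst F1 - {v1}. \<forall>v\<in>fst F1 - {v1}. ({h u, h v} \<in> {e\<in>snd F2. v2 \<notin> e}) = ({u, v} \<in> {e\<in>snd F1. v1 \<notin> e})"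
    "\<forall>v\<in>fst F1 - {v1}. lab F2 v2 (h v) = lab F1 v1 v"
  proof -
    from emb obtain h where "inj_on h (fst (del F1 v1))" "h ` fst (del F1 v1) \<subseteq> fst (del F2 v2)"
      "\<forall>u\<in>fst (del F1 v1). \<forall>v\<in>fst (del F1 v1). ({h u, h v} \<in> snd (del F2 v2)) = ({u, v} \<in> snd (del F1 v1))"
      "\<forall>v\<in>fst (del F1 v1). lab F2 v2 (h v) = lab F1 v1 v"
      unfolding lab_embed_def by auto
    then show ?thesis using that unfolding del_def fst_conv snd_conv by blast
  qed
  have loop1: "\<And>u. {u} \<notin> snd F1" using F1 by (auto simp: is_graph_def doubleton_eq_iff)
  have loop2: "\<And>u. {u} \<notin> snd F2" using F2 by (auto simp: is_graph_def doubleton_eq_iff)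
  define h' where "h' = h(v1 := v2)"
  show ?thesis unfolding induced_sub_def
  proof (intro exI[of _ h'] conjI ballI)
    show "inj_on h' (fst F1)"
    proof (rule inj_onI)
      fix x y assume xy: "x \<in> fst F1" "y \<in> fst F1" "h' x = h' y"
      show "x = y"
      proof (cases "x = v1"; cases "y = v1")
        assume "x \<noteq> v1" "y \<noteq> v1" then show ?thesis using xy h(1) unfolding h'_def inj_on_def by simp
      next
        assume a: "x = v1" "y \<noteq> v1"
        then have "h y \<in> fst F2 - {v2}" using h(2) xy by blast
        then show ?thesis using a xy unfolding h'_def by simp
      next
        assume a: "x \<noteq> v1" "y = v1"
        then have "h x \<in> fst F2 - {v2}" using h(2) xy by blast
        then show ?thesis using a xy unfolding h'_def by simp
      qed simp
    qed
    show "h' ` fst F1 \<subseteq> fst F2" using h(2) v1 v2 by (auto simp: h'_def)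
    fix u v assume uv: "u \<in> fst F1" "v \<in> fst F1"
    have side: "({v2, h x} \<in> snd F2) = ({v1, x} \<in> snd F1)" if "x \<in> fst F1 - {v1}" for x
    proof -
      have "lab F2 v2 (h x) = lab F1 v1 x" using h(4) that by blast
      then have "({h x, v2} \<in> snd F2) = ({x, v1} \<in> snd F1)" unfolding lab_def
        by (cases "{h x, v2} \<in> snd F2"; cases "{x, v1} \<in> snd F1") simp_all
      then show ?thesis by (simp add: insert_commute)
    qed
    show "({h' u, h' v} \<in> snd F2) = ({u, v} \<in> snd F1)"
    proof (cases "u = v1"; cases "v = v1")
      assume "u = v1" "v = v1" then show ?thesis using loop1 loop2 by (simp add: h'_def)
    next
      assume "u = v1" "v \<noteq> v1" then show ?thesis using side[of v] uv by (simp add: h'_def)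
    next
      assume "u \<noteq> v1" "v = v1" then show ?thesis using side[of u] uv by (simp add: h'_def insert_commute)
    next
      assume a: "u \<noteq> v1" "v \<noteq> v1"
      have "h u \<noteq> v2" "h v \<noteq> v2" using h(2) uv a by auto
      then show ?thesis using h(3) uv a by (auto simp: h'_def)
    qed
  qed
qed



lemma obstructions:
  assumes gr: "\<forall>G\<in>C. is_graph G" and her: "hereditary C" and wqo: "k_wqo 2 C"
  shows "\<exists>Fs. (\<forall>F\<in>set Fs. is_graph F \<and> F \<notin> C) \<and>
     (\<forall>G. is_graph G \<and> G \<notin> C \<longrightarrow> (\<exists>F\<in>set Fs. induced_sub F G))"
proof -
  define M where "M = {F. is_graph F \<and> F \<notin> C \<and>
     (\<forall>G. is_graph G \<and> induced_sub G F \<and> card (fst G) < card (fst F) \<longrightarrow> G \<in> C)}"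
  have claim1: "is_graph G \<Longrightarrow> G \<notin> C \<Longrightarrow> \<exists>F\<in>M. induced_sub F G" for G
  proof (induction "card (fst G)" arbitrary: G rule: less_induct)
    case less
    show ?case
    proof (cases "G \<in> M")
      case True then show ?thesis using induced_sub_refl by blast
    next
      case False
      then obtain H where H: "is_graph H" "induced_sub H G" "card (fst H) < card (fst G)" "H \<notin> C"
        using less.prems unfolding M_def by blast
      then obtain F where "F \<in> M" "induced_sub F H" using less.hyps by blast
      then show ?thesis using H induced_sub_trans by blast
    qed
  qed
  have claim2: "\<exists>Fs. set Fs \<subseteq> M \<and> (\<forall>F\<in>M. \<exists>F'\<in>set Fs. induced_sub F' F)"
  proof (cases "C = {}")
    case True
    have "({}, {}) \<in> M" using True empty_graph unfolding M_def by auto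
    then show ?thesis using empty_sub by (intro exI[of _ "[({}, {})]"]) auto
  next
    case False
    then obtain H where "H \<in> C" by blast
    then have E0: "({}, {}) \<in> C" using her empty_graph empty_sub unfolding hereditary_def by blast
    show ?thesis
    proof (rule ccontr)
      assume "\<not> ?thesis"
      then have hstep: "set xs \<subseteq> M \<Longrightarrow> \<exists>F. F \<in> M \<and> (\<forall>F'\<in>set xs. \<not> induced_sub F' F)" for xs
        by blast
      define step where "step xs = (SOME F. F \<in> M \<and> (\<forall>F'\<in>set xs. \<not> induced_sub F' F))" for xs
      have stepP: "set xs \<subseteq> M \<Longrightarrow> step xs \<in> M \<and> (\<forall>F'\<in>set xs. \<not> induced_sub F' (step xs))" for xs
        unfolding step_def by (rule someI_ex) (rule hstep)
      define L where "L = rec_nat [] (\<lambda>_ xs. xs @ [step xs])"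
      have L0: "L 0 = []" and LS: "L (Suc n) = L n @ [step (L n)]" for n by (simp_all add: L_def)
      have inv: "length (L n) = n \<and> set (L n) \<subseteq> M" for n
        by (induction n) (auto simp: L0 LS stepP)
      define f where "f n = step (L n)" for n
      have fM: "f n \<in> M" for n using stepP inv unfolding f_def by blast
      have Lnth: "i < n \<Longrightarrow> L n ! i = f i" for i n
      proof (induction n)
        case (Suc n)
        show ?case
        proof (cases "i < n")
          case True then show ?thesis using inv[of n] Suc by (simp add: LS nth_append)
        next
          case False then have "i = n" using Suc.prems by simp
          then show ?thesis using inv[of n] by (simp add: LS nth_append f_def)
        qed
      qed simp
      have anti: "i < j \<Longrightarrow> \<not> induced_sub (f i) (f j)" for i j
      proof -
        assume ij: "i < j"
        have "f i \<in> set (L j)" using Lnth[OF ij] inv[of j] ij by (metis nth_mem)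
        then show ?thesis using stepP inv unfolding f_def by blast
      qed
      have ne: "fst (f n) \<noteq> {}" for n
      proof
        assume e: "fst (f n) = {}"
        have g: "is_graph (f n)" "f n \<notin> C" using fM unfolding M_def by auto
        then have "snd (f n) = {}" using e unfolding is_graph_def by blast
        then have "f n = ({}, {})" using e by (metis prod.collapse)
        then show False using g E0 by simp
      qed
      define v where "v n = (SOME x. x \<in> fst (f n))" for n
      have v: "v n \<in> fst (f n)" for n using ne[of n] unfolding v_def by (simp add: some_in_eq)
      define g where "g n = (del (f n) (v n), lab (f n) (v n))" for n
      have gin: "g n \<in> labelled_class C {0, 1}" for n
      proof -
        have fm: "is_graph (f n)" "\<forall>G. is_graph G \<and> induced_sub G (f n) \<and> card (fst G) < card (fst (f n)) \<longrightarrow> G \<in> C"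
          using fM[of n] unfolding M_def by auto
        have "is_graph (del (f n) (v n)) \<and> induced_sub (del (f n) (v n)) (f n) \<and> card (fst (del (f n) (v n))) < card (fst (f n))"
          using del_props[OF fm(1) v] by (intro conjI)
        then have "del (f n) (v n) \<in> C" by (rule fm(2)[rule_format])
        moreover have "lab (f n) (v n) ` fst (del (f n) (v n)) \<subseteq> {0, 1}" unfolding lab_def by auto
        ultimately show ?thesis unfolding g_def labelled_class_def by simp
      qed
      have "wqo_on lab_embed (labelled_class C {0::nat, 1})"
        using wqo unfolding k_wqo_def by simp
      then have "\<forall>h::nat \<Rightarrow> graph \<times> (nat \<Rightarrow> nat). (\<forall>k. h k \<in> labelled_class C {0, 1}) \<longrightarrow> (\<exists>i j. i < j \<and> lab_embed (h i) (h j))"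
        unfolding wqo_on_def by blast
      then obtain i j where ij: "i < j" "lab_embed (g i) (g j)"
        using gin by blast
      have gi: "is_graph (f k)" for k using fM[of k] unfolding M_def by blast
      have "induced_sub (f i) (f j)"
        using extend[OF gi gi v[of i] v[of j]] ij(2) unfolding g_def by blast
      then show False using anti ij(1) by blast
    qed
  qed
  then obtain Fs where Fs: "set Fs \<subseteq> M" "\<forall>F\<in>M. \<exists>F'\<in>set Fs. induced_sub F' F" by blast
  have A: "\<forall>F\<in>set Fs. is_graph F \<and> F \<notin> C" using Fs unfolding M_def by auto
  have B: "\<forall>G. is_graph G \<and> G \<notin> C \<longrightarrow> (\<exists>F\<in>set Fs. induced_sub F G)"
  proof (intro allI impI)
    fix G assume "is_graph G \<and> G \<notin> C"
    then obtain F where "F \<in> M" "induced_sub F G" using claim1 by blast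
    then show "\<exists>F\<in>set Fs. induced_sub F G" using Fs induced_sub_trans by blast
  qed
  show ?thesis using A B by blast
qed


lemma apply_is_graph: "is_graph (apply_interp I w)"
proof -
  have "fst (apply_interp I w) \<subseteq> {..<length w}" by (auto simp: apply_interp_def interp_verts_def)
  then have "finite (fst (apply_interp I w))" using finite_subset by blast
  then show ?thesis unfolding is_graph_def by (auto simp: apply_interp_def) (metis less_irrefl_nat)
qed

theorem lemma2p2:
  fixes C :: "graph set"
  assumes "\<forall>G\<in>C. is_graph G"
    and "hereditary C"
    and "bounded_lcw C"
    and "k_wqo 2 C"
  shows "\<exists>I. wf_interp I \<and> subclass_iso C (Im I) \<and> Im I \<subseteq> hered_closure C"
proof -
  obtain I0 where wf: "wf_interp I0" and sub: "subclass_iso C (Im I0)"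
    using assms(3) unfolding bounded_lcw_def by blast
  obtain Fs where Fs1: "\<forall>F\<in>set Fs. is_graph F \<and> F \<notin> C"
    and Fs2: "\<forall>G. is_graph G \<and> G \<notin> C \<longrightarrow> (\<exists>F\<in>set Fs. induced_sub F G)"
    using obstructions[OF assms(1,2,4)] by blast
  define D where "D = And (phi_Delta I0) (Conj (map (\<lambda>F. Neg (contains I0 F)) Fs))"
  define I where "I = I0\<lparr>phi_Delta := D\<rparr>"
  have apI: "apply_interp I w = apply_interp I0 w" for w
    by (simp add: I_def apply_interp_def interp_verts_def)
  have satD: "sat w fe se D \<longleftrightarrow> sat w fe se (phi_Delta I0) \<and> (\<forall>F\<in>set Fs. \<not> induced_sub F (apply_interp I0 w))"
    for w fe se
    using sat_contains[OF wf] Fs1 by (auto simp: D_def)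
  have ImI: "Im I = {apply_interp I0 w | w. w \<in> lists (alph I0) \<and> sat w (\<lambda>_. 0) (\<lambda>_. {}) (phi_Delta I0) \<and>
      (\<forall>F\<in>set Fs. \<not> induced_sub F (apply_interp I0 w))}"
    unfolding Im_def apI by (simp add: I_def satD)
  have "fv1 D = {}" "fv2 D = {}" using wf fv_contains[OF wf] Fs1 by (auto simp: D_def wf_interp_def)
  then have wfI: "wf_interp I" using wf by (simp add: I_def wf_interp_def)
  have subI: "subclass_iso C (Im I)"
    unfolding subclass_iso_def
  proof
    fix G assume G: "G \<in> C"
    then obtain H where H: "H \<in> Im I0" "graph_iso G H" using sub unfolding subclass_iso_def by blast
    then obtain w where w: "H = apply_interp I0 w" "w \<in> lists (alph I0)" "sat w (\<lambda>_. 0) (\<lambda>_. {}) (phi_Delta I0)"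
      unfolding Im_def by blast
    have "\<not> induced_sub F H" if F: "F \<in> set Fs" for F
    proof
      assume "induced_sub F H"
      then have "induced_sub F G" using iso_sub[OF H(2)] induced_sub_trans by blast
      then have "F \<in> C" using G Fs1 F assms(2) unfolding hereditary_def by blast
      then show False using Fs1 F by blast
    qed
    then have "H \<in> Im I" unfolding ImI using w by blast
    then show "\<exists>H\<in>Im I. graph_iso G H" using H(2) by blast
  qed
  have "Im I \<subseteq> hered_closure C"
  proof
    fix H assume "H \<in> Im I"
    then obtain w where w: "H = apply_interp I0 w" "\<forall>F\<in>set Fs. \<not> induced_sub F (apply_interp I0 w)"
      unfolding ImI by blast
    have g: "is_graph H" using w(1) apply_is_graph by simp
    have "H \<in> C" using Fs2 g w by blast
    then show "H \<in> hered_closure C" using g induced_sub_refl unfolding hered_closure_def by blast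
  qed
  then show ?thesis using wfI subI by blast
qed

end
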